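(* Let $\Gamma$ be a finite ordinal potential game with profile set $S$. A state $s^*\in S$ is strongly maximal if and only if there is no advancement path in the ordinal deployment graph of $\Gamma$ whose first vertex is $s^*$.
   Context: A finite strategic-form game $\Gamma=(I,(S_i)_{i\in I},(u_i)_{i\in I})$ has finite player set $I$, finite nonempty strategy sets $S_i$, utilities $u_i:S\to\mathbb{R}$, $S=\prod_i S_i$; $(s_i',s_{-i})$ denotes $s$ with player $i$'s strategy replaced by $s_i'$. A function $P:S\to\mathbb{R}$ is an ordinal potential if for all $i$, $a,b\in S_i$, $\sigma_{-i}\in S_{-i}$: $u_i(a,\sigma_{-i})>u_i(b,\sigma_{-i})\iff P(a,\sigma_{-i})>P(b,\sigma_{-i})$; $\Gamma$ is an ordinal potential game if one exists. The ordinal deployment graph has vertex set $S$ and an arc $(s,s')$, $s'\neq s$, iff $s'=(s_i',s_{-i})$ for some $i$ with $u_i(s')\ge u_i(s)$; the arc is positive if $u_i(s')>u_i(s)$ and neutral otherwise. An advancement path is a directed path in the ordinal deployment graph containing at least one positive arc. Define $s\succeq s'$ iff there is a directed path (possibly of length $0$) from $s'$ to $s$, and $s\succ s'$ iff $s\succeq s'$ and not $s'\succeq s$. A state $s^*$ is strongly maximal if there is no $s$ with $s\succ s^*$. *)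

theory Defs
  imports Complex_Main "HOL-Library.FuncSet"
begin

text \<open>Profiles are extensional
  functions in PiE I St; (s_i', s_{-i}) is written s(i := a).\<close>

definition finite_game :: "'i set \<Rightarrow> ('i \<Rightarrow> 's set) \<Rightarrow> bool" where
  "finite_game I St \<longleftrightarrow> finite I \<and> (\<forall>i\<in>I. finite (St i) \<and> St i \<noteq> {})"

definition profiles :: "'i set \<Rightarrow> ('i \<Rightarrow> 's set) \<Rightarrow> ('i \<Rightarrow> 's) set" where
  "profiles I St = PiE I St"

definition ordinal_potential ::
  "'i set \<Rightarrow> ('i \<Rightarrow> 's set) \<Rightarrow> ('i \<Rightarrow> ('i \<Rightarrow> 's) \<Rightarrow> real) \<Rightarrow> (('i \<Rightarrow> 's) \<Rightarrow> real) \<Rightarrow> bool" where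
  "ordinal_potential I St u P \<longleftrightarrow>
     (\<forall>i\<in>I. \<forall>a\<in>St i. \<forall>b\<in>St i. \<forall>\<sigma>\<in>profiles I St.
        u i (\<sigma>(i := a)) > u i (\<sigma>(i := b)) \<longleftrightarrow> P (\<sigma>(i := a)) > P (\<sigma>(i := b)))"

definition ordinal_potential_game ::
  "'i set \<Rightarrow> ('i \<Rightarrow> 's set) \<Rightarrow> ('i \<Rightarrow> ('i \<Rightarrow> 's) \<Rightarrow> real) \<Rightarrow> bool" where
  "ordinal_potential_game I St u \<longleftrightarrow> (\<exists>P. ordinal_potential I St u P)"

definition dep_arc ::
  "'i set \<Rightarrow> ('i \<Rightarrow> 's set) \<Rightarrow> ('i \<Rightarrow> ('i \<Rightarrow> 's) \<Rightarrow> real) \<Rightarrow> ('i \<Rightarrow> 's) \<Rightarrow> ('i \<Rightarrow> 's) \<Rightarrow> bool" where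
  "dep_arc I St u s s' \<longleftrightarrow> s \<in> profiles I St \<and> s' \<in> profiles I St \<and> s' \<noteq> s \<and>
     (\<exists>i\<in>I. s' = s(i := s' i) \<and> u i s' \<ge> u i s)"

definition positive_arc ::
  "'i set \<Rightarrow> ('i \<Rightarrow> 's set) \<Rightarrow> ('i \<Rightarrow> ('i \<Rightarrow> 's) \<Rightarrow> real) \<Rightarrow> ('i \<Rightarrow> 's) \<Rightarrow> ('i \<Rightarrow> 's) \<Rightarrow> bool" where
  "positive_arc I St u s s' \<longleftrightarrow> dep_arc I St u s s' \<and>
     (\<exists>i\<in>I. s' = s(i := s' i) \<and> u i s' > u i s)"

definition dep_path ::
  "'i set \<Rightarrow> ('i \<Rightarrow> 's set) \<Rightarrow> ('i \<Rightarrow> ('i \<Rightarrow> 's) \<Rightarrow> real) \<Rightarrow> ('i \<Rightarrow> 's) list \<Rightarrow> bool" where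
  "dep_path I St u xs \<longleftrightarrow> xs \<noteq> [] \<and> distinct xs \<and> set xs \<subseteq> profiles I St \<and>
     (\<forall>k. Suc k < length xs \<longrightarrow> dep_arc I St u (xs ! k) (xs ! Suc k))"

definition advancement_path ::
  "'i set \<Rightarrow> ('i \<Rightarrow> 's set) \<Rightarrow> ('i \<Rightarrow> ('i \<Rightarrow> 's) \<Rightarrow> real) \<Rightarrow> ('i \<Rightarrow> 's) list \<Rightarrow> bool" where
  "advancement_path I St u xs \<longleftrightarrow> dep_path I St u xs \<and>
     (\<exists>k. Suc k < length xs \<and> positive_arc I St u (xs ! k) (xs ! Suc k))"

text \<open>succeq I St u s s' means s \<succeq> s': a directed path (possibly of length 0) from s' to s.\<close>
definition succeq ::
  "'i set \<Rightarrow> ('i \<Rightarrow> 's set) \<Rightarrow> ('i \<Rightarrow> ('i \<Rightarrow> 's) \<Rightarrow> real) \<Rightarrow> ('i \<Rightarrow> 's) \<Rightarrow> ('i \<Rightarrow> 's) \<Rightarrow> bool" where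
  "succeq I St u s s' \<longleftrightarrow> (\<exists>xs. dep_path I St u xs \<and> hd xs = s' \<and> last xs = s)"

definition succ ::
  "'i set \<Rightarrow> ('i \<Rightarrow> 's set) \<Rightarrow> ('i \<Rightarrow> ('i \<Rightarrow> 's) \<Rightarrow> real) \<Rightarrow> ('i \<Rightarrow> 's) \<Rightarrow> ('i \<Rightarrow> 's) \<Rightarrow> bool" where
  "succ I St u s s' \<longleftrightarrow> succeq I St u s s' \<and> \<not> succeq I St u s' s"

definition strongly_maximal ::
  "'i set \<Rightarrow> ('i \<Rightarrow> 's set) \<Rightarrow> ('i \<Rightarrow> ('i \<Rightarrow> 's) \<Rightarrow> real) \<Rightarrow> ('i \<Rightarrow> 's) \<Rightarrow> bool" where
  "strongly_maximal I St u s\<^sub>0 \<longleftrightarrow> \<not> (\<exists>s \<in> profiles I St. succ I St u s s\<^sub>0)"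

end

theory Submission
  imports Defs
begin

lemma arc_mono:
  assumes "ordinal_potential I St u P" "dep_arc I St u s s'"
  shows "P s \<le> P s'" and "positive_arc I St u s s' \<Longrightarrow> P s < P s'"
proof -
  have gen: "\<And>i. i \<in> I \<Longrightarrow> s' = s(i := s' i) \<Longrightarrow>
     (u i s' > u i s \<longleftrightarrow> P s' > P s) \<and> (u i s > u i s' \<longleftrightarrow> P s > P s')"
  proof -
    fix i assume i: "i \<in> I" and e: "s' = s(i := s' i)"
    have sp: "s \<in> profiles I St" "s' \<in> profiles I St" using assms(2) by (auto simp: dep_arc_def)
    hence a: "s' i \<in> St i" "s i \<in> St i" using i by (auto simp: profiles_def PiE_def Pi_def)
    have ss: "s(i := s i) = s" by simp
    from assms(1) have "\<forall>a\<in>St i. \<forall>b\<in>St i.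
        u i (s(i := a)) > u i (s(i := b)) \<longleftrightarrow> P (s(i := a)) > P (s(i := b))"
      using i sp unfolding ordinal_potential_def by blast
    from this[rule_format, OF a(1) a(2)] this[rule_format, OF a(2) a(1)]
    show "(u i s' > u i s \<longleftrightarrow> P s' > P s) \<and> (u i s > u i s' \<longleftrightarrow> P s > P s')"
      using e ss by metis
  qed
  from assms(2) obtain i where i: "i \<in> I" "s' = s(i := s' i)" "u i s' \<ge> u i s"
    by (auto simp: dep_arc_def)
  from gen[OF i(1,2)] i(3) show "P s \<le> P s'" by linarith
  assume "positive_arc I St u s s'"
  then obtain j where "j \<in> I" "s' = s(j := s' j)" "u j s' > u j s"
    by (auto simp: positive_arc_def)
  with gen show "P s < P s'" by blast
qed

lemma path_mono:
  assumes "ordinal_potential I St u P" "dep_path I St u xs"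
  shows "i \<le> j \<Longrightarrow> j < length xs \<Longrightarrow> P (xs ! i) \<le> P (xs ! j)"
proof (induction j)
  case 0 thus ?case by simp
next
  case (Suc j)
  show ?case
  proof (cases "i = Suc j")
    case True thus ?thesis by simp
  next
    case False
    hence "P (xs ! i) \<le> P (xs ! j)" using Suc by auto
    moreover have "dep_arc I St u (xs ! j) (xs ! Suc j)" using assms(2) Suc.prems
      by (auto simp: dep_path_def)
    hence "P (xs ! j) \<le> P (xs ! Suc j)" using arc_mono(1)[OF assms(1)] by blast
    ultimately show ?thesis by linarith
  qed
qed

lemma path_hd_last:
  assumes "ordinal_potential I St u P" "dep_path I St u xs"
  shows "P (hd xs) \<le> P (last xs)"
proof -
  have ne: "xs \<noteq> []" using assms(2) by (simp add: dep_path_def)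
  hence "hd xs = xs ! 0" "last xs = xs ! (length xs - 1)" by (auto simp: hd_conv_nth last_conv_nth)
  thus ?thesis using path_mono[OF assms, of 0 "length xs - 1"] ne by auto
qed

lemma adv_strict:
  assumes "ordinal_potential I St u P" "advancement_path I St u xs"
  shows "P (hd xs) < P (last xs)"
proof -
  have dp: "dep_path I St u xs" using assms(2) by (simp add: advancement_path_def)
  obtain k where k: "Suc k < length xs" "positive_arc I St u (xs ! k) (xs ! Suc k)"
    using assms(2) by (auto simp: advancement_path_def)
  have ne: "xs \<noteq> []" using dp by (simp add: dep_path_def)
  hence hl: "hd xs = xs ! 0" "last xs = xs ! (length xs - 1)" by (auto simp: hd_conv_nth last_conv_nth)
  have "P (xs ! 0) \<le> P (xs ! k)" using path_mono[OF assms(1) dp, of 0 k] k by auto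
  moreover have "P (xs ! k) < P (xs ! Suc k)"
    using arc_mono(2)[OF assms(1) _ k(2)] k(2) by (auto simp: positive_arc_def)
  moreover have "P (xs ! Suc k) \<le> P (xs ! (length xs - 1))"
    using path_mono[OF assms(1) dp, of "Suc k" "length xs - 1"] k by auto
  ultimately show ?thesis unfolding hl by linarith
qed

lemma arc_rev:
  assumes "dep_arc I St u s s'" "\<not> positive_arc I St u s s'"
  shows "dep_arc I St u s' s"
proof -
  from assms(1) obtain i where i: "i \<in> I" "s' = s(i := s' i)" "u i s' \<ge> u i s"
    and p: "s \<in> profiles I St" "s' \<in> profiles I St" "s' \<noteq> s"
    by (auto simp: dep_arc_def)
  have "\<not> u i s' > u i s" using assms i unfolding positive_arc_def by blast
  hence "u i s \<ge> u i s'" by linarith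
  moreover have "s = s'(i := s i)"
  proof
    fix j show "s j = (s'(i := s i)) j" using i(2) by (cases "j = i") (auto dest: fun_cong[of _ _ j])
  qed
  ultimately show ?thesis using i(1) p unfolding dep_arc_def by auto
qed

lemma path_rev:
  assumes "dep_path I St u xs"
    and "\<forall>k. Suc k < length xs \<longrightarrow> \<not> positive_arc I St u (xs ! k) (xs ! Suc k)"
  shows "dep_path I St u (rev xs)"
  unfolding dep_path_def
proof (intro conjI allI impI)
  show "rev xs \<noteq> []" "distinct (rev xs)" "set (rev xs) \<subseteq> profiles I St"
    using assms(1) by (auto simp: dep_path_def)
  fix k assume k: "Suc k < length (rev xs)"
  define m where "m = length xs - Suc (Suc k)"
  have e1: "rev xs ! k = xs ! Suc m" using k by (simp add: rev_nth m_def Suc_diff_Suc)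
  have e2: "rev xs ! Suc k = xs ! m" using k by (simp add: rev_nth m_def)
  have m: "Suc m < length xs" using k by (simp add: m_def)
  show "dep_arc I St u (rev xs ! k) (rev xs ! Suc k)"
    unfolding e1 e2 using arc_rev assms m unfolding dep_path_def by blast
qed

theorem lemma1:
  fixes I :: "'i set" and St :: "'i \<Rightarrow> 's set" and u :: "'i \<Rightarrow> ('i \<Rightarrow> 's) \<Rightarrow> real"
    and s\<^sub>0 :: "'i \<Rightarrow> 's"
  assumes "finite_game I St"
    and "ordinal_potential_game I St u"
    and "s\<^sub>0 \<in> profiles I St"
  shows "strongly_maximal I St u s\<^sub>0 \<longleftrightarrow>
         \<not> (\<exists>xs. advancement_path I St u xs \<and> hd xs = s\<^sub>0)"
proof
  obtain P where P: "ordinal_potential I St u P" using assms(2) by (auto simp: ordinal_potential_game_def)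
  assume sm: "strongly_maximal I St u s\<^sub>0"
  show "\<not> (\<exists>xs. advancement_path I St u xs \<and> hd xs = s\<^sub>0)"
  proof
    assume "\<exists>xs. advancement_path I St u xs \<and> hd xs = s\<^sub>0"
    then obtain xs where xs: "advancement_path I St u xs" "hd xs = s\<^sub>0" by blast
    have dp: "dep_path I St u xs" using xs by (simp add: advancement_path_def)
    have lt: "P s\<^sub>0 < P (last xs)" using adv_strict[OF P xs(1)] xs(2) by simp
    have "last xs \<in> profiles I St" using dp by (auto simp: dep_path_def)
    moreover have "succeq I St u (last xs) s\<^sub>0" using dp xs(2) by (auto simp: succeq_def)
    moreover have "\<not> succeq I St u s\<^sub>0 (last xs)"
    proof
      assume "succeq I St u s\<^sub>0 (last xs)"
      then obtain ys where "dep_path I St u ys" "hd ys = last xs" "last ys = s\<^sub>0"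
        by (auto simp: succeq_def)
      with path_hd_last[OF P] lt show False by force
    qed
    ultimately show False using sm by (auto simp: strongly_maximal_def succ_def)
  qed
next
  assume na: "\<not> (\<exists>xs. advancement_path I St u xs \<and> hd xs = s\<^sub>0)"
  show "strongly_maximal I St u s\<^sub>0"
    unfolding strongly_maximal_def
  proof
    assume "\<exists>s\<in>profiles I St. succ I St u s s\<^sub>0"
    then obtain s xs where sc: "\<not> succeq I St u s\<^sub>0 s" and xs: "dep_path I St u xs" "hd xs = s\<^sub>0" "last xs = s"
      by (auto simp: succ_def succeq_def)
    have "\<forall>k. Suc k < length xs \<longrightarrow> \<not> positive_arc I St u (xs ! k) (xs ! Suc k)"
      using na xs unfolding advancement_path_def by blast
    hence "dep_path I St u (rev xs)" using path_rev xs(1) by blast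
    moreover have "xs \<noteq> []" using xs(1) by (simp add: dep_path_def)
    ultimately have "succeq I St u s\<^sub>0 s" using xs unfolding succeq_def
      by (metis hd_rev last_rev)
    with sc show False by simp
  qed
qed

end
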